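(* Let $\mathfrak W=(W_s)_{s\in\mathcal S}$ be an arbitrarily varying channel with input alphabet $\mathcal A$, output alphabet $\mathcal B$ and finite state set $\mathcal S$. Let $T\in C(\mathcal A',\mathcal A)$ be a channel, and let $\mathfrak W'$ be the arbitrarily varying channel with input alphabet $\mathcal A'$, output alphabet $\mathcal B$ and state set $\mathcal S$ given by $w'(b|a',s):=\sum_{a\in\mathcal A}w(b|a,s)t(a|a')$ (i.e. $W'_s=W_s\circ T$). If $\mathfrak W$ is symmetrizable, then $\mathfrak W'$ is symmetrizable.
   Context: All sets are finite. $C(\mathcal A,\mathcal B)$ is the set of channels (stochastic matrices $w(b|a)$) from $\mathcal A$ to $\mathcal B$; $w(b|a,s)$ denotes the transition probability of $W_s$. An arbitrarily varying channel $(W_s)_{s\in\mathcal S}$ with input alphabet $\mathcal A$ is symmetrizable if there is $U\in C(\mathcal A,\mathcal S)$ with $\sum_su(s|a)w(b|a',s)=\sum_su(s|a')w(b|a,s)$ for all $a,a'\in\mathcal A$, $b\in\mathcal B$. *)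

theory Defs
  imports Main "HOL-Analysis.Analysis"
begin

text \<open>A channel from 'a to 'b: stochastic matrix w(b|a), written w b a.\<close>
definition channel :: "('b::finite \<Rightarrow> 'a::finite \<Rightarrow> real) \<Rightarrow> bool" where
  "channel w \<longleftrightarrow> (\<forall>a b. 0 \<le> w b a) \<and> (\<forall>a. (\<Sum>b\<in>UNIV. w b a) = 1)"

definition avc :: "('b::finite \<Rightarrow> 'a::finite \<Rightarrow> 's::finite \<Rightarrow> real) \<Rightarrow> bool" where
  "avc w \<longleftrightarrow> (\<forall>s. channel (\<lambda>b a. w b a s))"

definition symmetrizable :: "('b::finite \<Rightarrow> 'a::finite \<Rightarrow> 's::finite \<Rightarrow> real) \<Rightarrow> bool" where
  "symmetrizable w \<longleftrightarrow> (\<exists>u :: 's \<Rightarrow> 'a \<Rightarrow> real. channel u \<and>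
     (\<forall>a a' b. (\<Sum>s\<in>UNIV. u s a * w b a' s) = (\<Sum>s\<in>UNIV. u s a' * w b a s)))"

end

theory Submission
  imports Defs
begin

theorem lemma3:
  fixes w :: "'b::finite \<Rightarrow> 'a::finite \<Rightarrow> 's::finite \<Rightarrow> real"
    and t :: "'a \<Rightarrow> 'a2::finite \<Rightarrow> real"
  assumes "avc w" and "channel t" and "symmetrizable w"
  shows "symmetrizable (\<lambda>b a' s. \<Sum>a\<in>UNIV. w b a s * t a a')"
proof -
  obtain u :: "'s \<Rightarrow> 'a \<Rightarrow> real" where u: "channel u"
    and sym: "\<And>a a' b. (\<Sum>s\<in>UNIV. u s a * w b a' s) = (\<Sum>s\<in>UNIV. u s a' * w b a s)"
    using assms(3) unfolding symmetrizable_def by blast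
  define u' where "u' s x = (\<Sum>a\<in>UNIV. u s a * t a x)" for s and x :: 'a2
  have T: "\<And>a x. 0 \<le> t a x" "\<And>x. (\<Sum>a\<in>UNIV. t a x) = 1" using assms(2) unfolding channel_def by auto
  have U: "\<And>a s. 0 \<le> u s a" "\<And>a. (\<Sum>s\<in>UNIV. u s a) = 1" using u unfolding channel_def by auto
  have ch: "channel u'"
    unfolding channel_def u'_def
  proof (intro conjI allI)
    fix x s show "0 \<le> (\<Sum>a\<in>UNIV. u s a * t a x)" using T U by (intro sum_nonneg) auto
  next
    fix x
    have "(\<Sum>s\<in>UNIV. \<Sum>a\<in>UNIV. u s a * t a x) = (\<Sum>a\<in>UNIV. (\<Sum>s\<in>UNIV. u s a) * t a x)"
      by (subst sum.swap) (simp add: sum_distrib_right)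
    also have "\<dots> = 1" using U T by simp
    finally show "(\<Sum>s\<in>UNIV. \<Sum>a\<in>UNIV. u s a * t a x) = 1" .
  qed
  have key: "(\<Sum>s\<in>UNIV. u' s x * (\<Sum>c\<in>UNIV. w b c s * t c y))
     = (\<Sum>a\<in>UNIV. \<Sum>c\<in>UNIV. t a x * t c y * (\<Sum>s\<in>UNIV. u s a * w b c s))" for x y b
  proof -
    have "(\<Sum>s\<in>UNIV. u' s x * (\<Sum>c\<in>UNIV. w b c s * t c y))
      = (\<Sum>s\<in>UNIV. \<Sum>a\<in>UNIV. \<Sum>c\<in>UNIV. t a x * t c y * (u s a * w b c s))"
      unfolding u'_def
      apply (simp add: sum_distrib_left sum_distrib_right mult_ac sum_product)
      apply (rule sum.cong[OF refl])
      apply (subst sum.swap)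
      apply (simp add: mult_ac)
      done
    also have "\<dots> = (\<Sum>a\<in>UNIV. \<Sum>s\<in>UNIV. \<Sum>c\<in>UNIV. t a x * t c y * (u s a * w b c s))"
      by (rule sum.swap)
    also have "\<dots> = (\<Sum>a\<in>UNIV. \<Sum>c\<in>UNIV. \<Sum>s\<in>UNIV. t a x * t c y * (u s a * w b c s))"
      by (intro sum.cong refl sum.swap)
    also have "\<dots> = (\<Sum>a\<in>UNIV. \<Sum>c\<in>UNIV. t a x * t c y * (\<Sum>s\<in>UNIV. u s a * w b c s))"
      by (simp add: sum_distrib_left)
    finally show ?thesis .
  qed
  have "(\<Sum>s\<in>UNIV. u' s x * (\<Sum>c\<in>UNIV. w b c s * t c y))
      = (\<Sum>s\<in>UNIV. u' s y * (\<Sum>c\<in>UNIV. w b c s * t c x))" for x y b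
  proof -
    have "(\<Sum>a\<in>UNIV. \<Sum>c\<in>UNIV. t a x * t c y * (\<Sum>s\<in>UNIV. u s a * w b c s))
        = (\<Sum>a\<in>UNIV. \<Sum>c\<in>UNIV. t a x * t c y * (\<Sum>s\<in>UNIV. u s c * w b a s))"
      using sym by simp
    also have "\<dots> = (\<Sum>c\<in>UNIV. \<Sum>a\<in>UNIV. t a x * t c y * (\<Sum>s\<in>UNIV. u s c * w b a s))"
      by (rule sum.swap)
    also have "\<dots> = (\<Sum>c\<in>UNIV. \<Sum>a\<in>UNIV. t c y * t a x * (\<Sum>s\<in>UNIV. u s c * w b a s))"
      by (simp add: mult_ac)
    finally show ?thesis using key by metis
  qed
  with ch show ?thesis unfolding symmetrizable_def by blast
qed

end
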